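(* Consider the equality problem (E) and algorithm PIR2, and suppose the algorithm terminates at iteration $k^*$ because $\Delta^{k^*}=\nabla^{k^*}$ (with $J^{k^*}\neq\emptyset$). Let $L$ be the set of indices fixed at their lower bounds during iterations $k<k^*$ (i.e. the union of $L^k$ over iterations with $\nabla^k>\Delta^k$) together with $L^{k^*}$, and $U$ the analogous set for upper bounds. Define $\rho_j:=\phi_j'(l_j)+\mu^{k^*}a_j$ for $j\in L$, $\rho_j:=0$ for $j\notin L$, $\lambda_j:=-\phi_j'(u_j)-\mu^{k^*}a_j$ for $j\in U$, and $\lambda_j:=0$ for $j\notin U$. Then $\rho_j\ge0$ and $\lambda_j\ge0$ for all $j\in J$.
   Context: Let $J=\{1,\dots,n\}$. Problem (E): minimize $\sum_{j\in J}\phi_j(x_j)$ subject to $\sum_{j\in J}a_jx_j=b$, $l_j\le x_j\le u_j$ ($j\in J$), where each $\phi_j:\mathbb{R}\to\mathbb{R}$ is strictly convex and continuously differentiable with $\phi_j'$ a bijection of $\mathbb{R}$ onto $\mathbb{R}$, $a_j>0$, $-\infty<l_j<u_j<\infty$, and (E) has an optimal solution. Algorithm PIR2 for (E): set $J^1:=J$, $b^1:=b$, $k:=1$. At iteration $k$, let $(\hat{\mathbf{x}}^k,\mu^k)$ be the unique pair with $\phi_j'(\hat x_j^k)+\mu^ka_j=0$ for $j\in J^k$ and $\sum_{j\in J^k}a_j\hat x^k_j=b^k$ (the solution and multiplier of the problem restricted to $J^k$ with right-hand side $b^k$ and no bound constraints). Let $L^k:=\{j\in J^k:\hat x^k_j\le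 l_j\}$, $U^k:=\{j\in J^k:\hat x^k_j\ge u_j\}$, $\nabla^k:=\sum_{j\in L^k}a_j(l_j-\hat x_j^k)$, $\Delta^k:=\sum_{j\in U^k}a_j(\hat x_j^k-u_j)$. If $\Delta^k=\nabla^k$, stop ($k^*:=k$) and set $x_j=l_j$ on $L^k$, $x_j=u_j$ on $U^k$, $x_j=\hat x_j^k$ on the rest of $J^k$. If $\nabla^k>\Delta^k$, fix $x_j:=l_j$ for $j\in L^k$, set $J^{k+1}:=J^k\setminus L^k$, $b^{k+1}:=b^k-\sum_{j\in L^k}a_jl_j$. If $\nabla^k<\Delta^k$, fix $x_j:=u_j$ for $j\in U^k$, set $J^{k+1}:=J^k\setminus U^k$, $b^{k+1}:=b^k-\sum_{j\in U^k}a_ju_j$. If $J^{k+1}=\emptyset$ stop; otherwise increase $k$ by one and repeat. *)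

theory Defs
  imports "HOL-Analysis.Analysis"
begin

definition strictly_convex :: "(real \<Rightarrow> real) \<Rightarrow> bool" where
  "strictly_convex f \<longleftrightarrow> (\<forall>x y t. x \<noteq> y \<and> 0 < t \<and> t < 1 \<longrightarrow>
      f ((1 - t) * x + t * y) < (1 - t) * f x + t * f y)"

definition pir_mu :: "(nat \<Rightarrow> real \<Rightarrow> real) \<Rightarrow> (nat \<Rightarrow> real) \<Rightarrow> nat set \<Rightarrow> real \<Rightarrow> real" where
  "pir_mu dphi a Jk bk = (THE mu. \<exists>x. (\<forall>j\<in>Jk. dphi j (x j) + mu * a j = 0)
                                   \<and> (\<Sum>j\<in>Jk. a j * x j) = bk)"

definition pir_xhat :: "(nat \<Rightarrow> real \<Rightarrow> real) \<Rightarrow> (nat \<Rightarrow> real) \<Rightarrow> nat set \<Rightarrow> real \<Rightarrow> nat \<Rightarrow> real" where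
  "pir_xhat dphi a Jk bk j = (THE x. dphi j x + pir_mu dphi a Jk bk * a j = 0)"

definition pir_L where
  "pir_L dphi a l Jk bk = {j \<in> Jk. pir_xhat dphi a Jk bk j \<le> l j}"

definition pir_U where
  "pir_U dphi a u Jk bk = {j \<in> Jk. pir_xhat dphi a Jk bk j \<ge> u j}"

definition pir_nabla where
  "pir_nabla dphi a l Jk bk = (\<Sum>j\<in>pir_L dphi a l Jk bk. a j * (l j - pir_xhat dphi a Jk bk j))"

definition pir_Delta where
  "pir_Delta dphi a u Jk bk = (\<Sum>j\<in>pir_U dphi a u Jk bk. a j * (pir_xhat dphi a Jk bk j - u j))"

text \<open>State (J^{k+1}, b^{k+1}) of algorithm PIR2 (0-based: index k is iteration k+1 of
  the paper). Once the algorithm has stopped the state stays constant.\<close>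
primrec pir_state ::
  "(nat \<Rightarrow> real \<Rightarrow> real) \<Rightarrow> (nat \<Rightarrow> real) \<Rightarrow> (nat \<Rightarrow> real) \<Rightarrow> (nat \<Rightarrow> real)
   \<Rightarrow> nat set \<Rightarrow> real \<Rightarrow> nat \<Rightarrow> nat set \<times> real" where
  "pir_state dphi a l u J b 0 = (J, b)"
| "pir_state dphi a l u J b (Suc k) =
     (let (Jk, bk) = pir_state dphi a l u J b k;
          Lk = pir_L dphi a l Jk bk; Uk = pir_U dphi a u Jk bk;
          nk = pir_nabla dphi a l Jk bk; dk = pir_Delta dphi a u Jk bk
      in if Jk = {} then (Jk, bk)
         else if nk > dk then (Jk - Lk, bk - (\<Sum>j\<in>Lk. a j * l j))
         else if nk < dk then (Jk - Uk, bk - (\<Sum>j\<in>Uk. a j * u j))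
         else (Jk, bk))"

end

theory Submission imports Defs begin

lemma sc_convex:
  assumes "strictly_convex f"
  shows "convex_on UNIV f"
proof (rule convex_onI)
  fix t x y :: real assume t: "t > 0" "t < 1"
  show "f ((1 - t) *\<^sub>R x + t *\<^sub>R y) \<le> (1 - t) * f x + t * f y"
  proof (cases "x = y")
    case True
    have "(1 - t) * x + t * x = x" by (simp add: algebra_simps)
    then show ?thesis using True by (simp add: algebra_simps)
  next
    case False
    then show ?thesis using assms t unfolding strictly_convex_def by (simp add: less_imp_le)
  qed
qed simp

lemma dphi_mono:
  assumes sc: "strictly_convex f" and d: "\<And>x. (f has_real_derivative df x) (at x)"
    and inj: "inj df"
  shows "strict_mono df"
proof (rule strict_monoI)
  fix x y :: real assume xy: "x < y"
  have cv: "convex_on UNIV f" using sc_convex[OF sc] .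
  have 1: "f y - f x \<ge> df x * (y - x)"
    by (rule convex_on_imp_above_tangent[OF cv]) (auto simp: d)
  have 2: "f x - f y \<ge> df y * (x - y)"
    by (rule convex_on_imp_above_tangent[OF cv]) (auto simp: d)
  have "df x * (y - x) \<le> df y * (y - x)" using 1 2 by (simp add: algebra_simps)
  then have "df x \<le> df y" using xy by simp
  moreover have "df x \<noteq> df y"
  proof
    assume "df x = df y" then have "x = y" using inj by (simp add: inj_eq)
    then show False using xy by simp
  qed
  ultimately show "df x < df y" by simp
qed

definition good :: "(nat \<Rightarrow> real \<Rightarrow> real) \<Rightarrow> (nat \<Rightarrow> real) \<Rightarrow> (nat \<Rightarrow> real) \<Rightarrow> (nat \<Rightarrow> real) \<Rightarrow> nat \<Rightarrow> bool" where
  "good dphi a l u j \<longleftrightarrow> a j > 0 \<and> strict_mono (dphi j) \<and> bij (dphi j) \<and> continuous_on UNIV (dphi j) \<and> l j < u j"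

definition Xf :: "(nat \<Rightarrow> real \<Rightarrow> real) \<Rightarrow> (nat \<Rightarrow> real) \<Rightarrow> nat \<Rightarrow> real \<Rightarrow> real" where
  "Xf dphi a j m = inv (dphi j) (- m * a j)"

lemma Xf_eq: "good dphi a l u j \<Longrightarrow> dphi j (Xf dphi a j m) = - m * a j"
  unfolding good_def Xf_def by (meson bij_is_surj surj_f_inv_f)

lemma inv_le_iff:
  fixes g :: "real \<Rightarrow> real" assumes "strict_mono g" "bij g" shows "inv g y \<le> x \<longleftrightarrow> y \<le> g x"
proof -
  have "g (inv g y) = y" using assms(2) by (simp add: bij_is_surj surj_f_inv_f)
  moreover have "inv g y \<le> x \<longleftrightarrow> g (inv g y) \<le> g x" by (simp add: strict_mono_less_eq[OF assms(1)])
  ultimately show ?thesis by simp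
qed

lemma inv_ge_iff:
  fixes g :: "real \<Rightarrow> real" assumes "strict_mono g" "bij g" shows "x \<le> inv g y \<longleftrightarrow> g x \<le> y"
proof -
  have "g (inv g y) = y" using assms(2) by (simp add: bij_is_surj surj_f_inv_f)
  moreover have "x \<le> inv g y \<longleftrightarrow> g x \<le> g (inv g y)" by (simp add: strict_mono_less_eq[OF assms(1)])
  ultimately show ?thesis by simp
qed

lemma Xf_le_iff: assumes "good dphi a l u j" shows "Xf dphi a j m \<le> x \<longleftrightarrow> - m * a j \<le> dphi j x"
proof -
  have "strict_mono (dphi j)" "bij (dphi j)" using assms by (simp_all add: good_def)
  then show ?thesis unfolding Xf_def by (rule inv_le_iff)
qed

lemma Xf_ge_iff: assumes "good dphi a l u j" shows "x \<le> Xf dphi a j m \<longleftrightarrow> dphi j x \<le> - m * a j"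
proof -
  have "strict_mono (dphi j)" "bij (dphi j)" using assms by (simp_all add: good_def)
  then show ?thesis unfolding Xf_def by (rule inv_ge_iff)
qed

lemma Xf_anti: assumes g: "good dphi a l u j" and mm: "m \<le> m'" shows "Xf dphi a j m' \<le> Xf dphi a j m"
proof -
  have "a j > 0" using g by (simp add: good_def)
  then have "m * a j \<le> m' * a j" using mm by (simp add: mult_right_mono)
  then have "- m' * a j \<le> dphi j (Xf dphi a j m)" using Xf_eq[OF g, of m] by simp
  then show ?thesis using Xf_le_iff[OF g] by blast
qed

lemma Xf_santi: assumes g: "good dphi a l u j" and mm: "m < m'" shows "Xf dphi a j m' < Xf dphi a j m"
proof -
  have "a j > 0" using g by (simp add: good_def)
  then have "m * a j < m' * a j" using mm by (simp add: mult_strict_right_mono)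
  then have "\<not> dphi j (Xf dphi a j m) \<le> - m' * a j" using Xf_eq[OF g, of m] by simp
  then show ?thesis using Xf_ge_iff[OF g, of "Xf dphi a j m" m'] by linarith
qed

lemma Xf_cont: assumes "good dphi a l u j" shows "isCont (Xf dphi a j) m"
proof -
  have g: "strict_mono (dphi j)" "bij (dphi j)" "continuous_on UNIV (dphi j)" using assms good_def by auto
  obtain x where x: "- m * a j = dphi j x" using g(2) by (metis bij_is_surj surj_f_inv_f)
  have "isCont (inv (dphi j)) (dphi j x)"
  proof (rule isCont_inverse_function[where d=1 and f="dphi j" and g="inv (dphi j)" and x=x])
    show "\<And>z. \<bar>z - x\<bar> \<le> 1 \<Longrightarrow> inv (dphi j) (dphi j z) = z" using g(2) by (simp add: bij_is_inj)
    show "\<And>z. \<bar>z - x\<bar> \<le> 1 \<Longrightarrow> isCont (dphi j) z" using g(3) by (simp add: continuous_on_eq_continuous_at)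
  qed simp
  then have "isCont (inv (dphi j)) (- m * a j)" using x by simp
  then show ?thesis unfolding Xf_def
    by (intro continuous_intros isCont_o2[where f="\<lambda>m. - m * a j"]) auto
qed

lemma xhat_eq: assumes "good dphi a l u j" shows "pir_xhat dphi a K bb j = Xf dphi a j (pir_mu dphi a K bb)"
  unfolding pir_xhat_def
proof (rule the_equality)
  show "dphi j (Xf dphi a j (pir_mu dphi a K bb)) + pir_mu dphi a K bb * a j = 0"
    using Xf_eq[OF assms] by simp
  fix x assume "dphi j x + pir_mu dphi a K bb * a j = 0"
  then have "dphi j x = dphi j (Xf dphi a j (pir_mu dphi a K bb))" using Xf_eq[OF assms] by simp
  then show "x = Xf dphi a j (pir_mu dphi a K bb)" using assms unfolding good_def
    by (meson strict_mono_eq)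
qed


lemma mu_char:
  assumes fin: "finite K" and ne: "K \<noteq> {}" and gd: "\<And>j. j \<in> K \<Longrightarrow> good dphi a l u j"
  shows "(\<Sum>j\<in>K. a j * Xf dphi a j (pir_mu dphi a K bb)) = bb"
proof -
  define h where "h m = (\<Sum>j\<in>K. a j * Xf dphi a j m)" for m
  have apos: "\<And>j. j \<in> K \<Longrightarrow> a j > 0" using gd good_def by blast
  have hs: "h m' < h m" if "m < m'" for m m'
    unfolding h_def
    by (rule sum_strict_mono[OF fin ne]) (use apos Xf_santi[OF gd that] in auto)
  have hc: "isCont h m" for m
    unfolding h_def by (intro continuous_intros Xf_cont[OF gd]) auto
  define A where "A = (\<Sum>j\<in>K. a j)"
  have Apos: "A > 0" unfolding A_def using apos fin ne by (simp add: sum_pos)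
  define c where "c = bb / A"
  define m1 where "m1 = Max ((\<lambda>j. - dphi j c / a j) ` K)"
  define m2 where "m2 = Min ((\<lambda>j. - dphi j c / a j) ` K)"
  have hA: "(\<Sum>j\<in>K. a j * c) = bb" unfolding c_def A_def sum_distrib_right[symmetric]
    using Apos A_def by simp
  have "h m1 \<le> (\<Sum>j\<in>K. a j * c)" unfolding h_def
  proof (rule sum_mono)
    fix j assume j: "j \<in> K"
    have "- dphi j c / a j \<le> m1" unfolding m1_def using fin j by simp
    then have "- dphi j c \<le> m1 * a j" using apos[OF j] pos_divide_le_eq[of "a j" "- dphi j c" m1] by simp
    then have "- m1 * a j \<le> dphi j c" by simp
    then have "Xf dphi a j m1 \<le> c" using Xf_le_iff[OF gd[OF j]] by simp
    then show "a j * Xf dphi a j m1 \<le> a j * c" using apos[OF j] by simp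
  qed
  moreover have "(\<Sum>j\<in>K. a j * c) \<le> h m2" unfolding h_def
  proof (rule sum_mono)
    fix j assume j: "j \<in> K"
    have "m2 \<le> - dphi j c / a j" unfolding m2_def using fin j by simp
    then have "m2 * a j \<le> - dphi j c" using apos[OF j] pos_le_divide_eq[of "a j" m2 "- dphi j c"] by simp
    then have "dphi j c \<le> - m2 * a j" by simp
    then have "c \<le> Xf dphi a j m2" using Xf_ge_iff[OF gd[OF j]] by simp
    then show "a j * c \<le> a j * Xf dphi a j m2" using apos[OF j] by simp
  qed
  moreover have "m2 \<le> m1"
  proof -
    obtain j0 where j0: "j0 \<in> K" using ne by blast
    have "m2 \<le> - dphi j0 c / a j0" unfolding m2_def using fin j0 by simp
    also have "\<dots> \<le> m1" unfolding m1_def using fin j0 by simp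
    finally show ?thesis .
  qed
  ultimately obtain m where m: "h m = bb" using IVT2[of h m1 bb m2] hc hA by auto
  have ex1: "\<exists>!mu. \<exists>x. (\<forall>j\<in>K. dphi j (x j) + mu * a j = 0) \<and> (\<Sum>j\<in>K. a j * x j) = bb"
  proof (rule ex1I)
    show "\<exists>x. (\<forall>j\<in>K. dphi j (x j) + m * a j = 0) \<and> (\<Sum>j\<in>K. a j * x j) = bb"
    proof (rule exI[of _ "\<lambda>j. Xf dphi a j m"], intro conjI ballI)
      fix j assume j: "j \<in> K"
      show "dphi j (Xf dphi a j m) + m * a j = 0" using Xf_eq[OF gd[OF j]] by simp
    next
      show "(\<Sum>j\<in>K. a j * Xf dphi a j m) = bb" using m unfolding h_def .
    qed
    fix mu assume "\<exists>x. (\<forall>j\<in>K. dphi j (x j) + mu * a j = 0) \<and> (\<Sum>j\<in>K. a j * x j) = bb"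
    then obtain x where x: "\<forall>j\<in>K. dphi j (x j) + mu * a j = 0" "(\<Sum>j\<in>K. a j * x j) = bb" by blast
    have "x j = Xf dphi a j mu" if j: "j \<in> K" for j
    proof -
      have "dphi j (x j) = dphi j (Xf dphi a j mu)" using x(1) j Xf_eq[OF gd[OF j]] by force
      then show ?thesis using gd[OF j] unfolding good_def by (meson strict_mono_eq)
    qed
    then have "h mu = bb" using x(2) unfolding h_def by simp
    then show "mu = m" using hs m by (metis linorder_neqE_linordered_idom less_irrefl)
  qed
  obtain x where x: "\<forall>j\<in>K. dphi j (x j) + pir_mu dphi a K bb * a j = 0" "(\<Sum>j\<in>K. a j * x j) = bb"
    using theI'[OF ex1] unfolding pir_mu_def by blast
  have "x j = Xf dphi a j (pir_mu dphi a K bb)" if j: "j \<in> K" for j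
  proof -
    have "dphi j (x j) = dphi j (Xf dphi a j (pir_mu dphi a K bb))" using x(1) j Xf_eq[OF gd[OF j]] by force
    then show ?thesis using gd[OF j] unfolding good_def by (meson strict_mono_eq)
  qed
  then show ?thesis using x(2) by simp
qed

definition Gf where
  "Gf dphi a l u K m = (\<Sum>j\<in>K. a j * max (l j) (min (u j) (Xf dphi a j m)))"

lemma Gf_anti:
  assumes mm: "m \<le> m'" and gd: "\<And>j. j \<in> K \<Longrightarrow> good dphi a l u j"
  shows "Gf dphi a l u K m' \<le> Gf dphi a l u K m"
  unfolding Gf_def
proof (rule sum_mono)
  fix j assume j: "j \<in> K"
  have "Xf dphi a j m' \<le> Xf dphi a j m" using Xf_anti[OF gd[OF j] mm] .
  moreover have "a j > 0" using gd[OF j] good_def by blast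
  ultimately show "a j * max (l j) (min (u j) (Xf dphi a j m')) \<le> a j * max (l j) (min (u j) (Xf dphi a j m))"
    by (intro mult_left_mono) auto
qed

lemma Gf_at:
  assumes fin: "finite K" and ne: "K \<noteq> {}" and gd: "\<And>j. j \<in> K \<Longrightarrow> good dphi a l u j"
  shows "Gf dphi a l u K (pir_mu dphi a K bb) = bb + pir_nabla dphi a l K bb - pir_Delta dphi a u K bb"
proof -
  define m where "m = pir_mu dphi a K bb"
  define x where "x j = Xf dphi a j m" for j
  have xh: "\<And>j. j \<in> K \<Longrightarrow> pir_xhat dphi a K bb j = x j" using xhat_eq gd unfolding x_def m_def by blast
  have trm: "a j * max (l j) (min (u j) (x j)) = a j * x j + (if x j \<le> l j then a j * (l j - x j) else 0)
        - (if u j \<le> x j then a j * (x j - u j) else 0)" if j: "j \<in> K" for j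
    using gd[OF j] unfolding good_def by (auto simp: algebra_simps max_def min_def)
  have L: "pir_L dphi a l K bb = {j \<in> K. x j \<le> l j}" unfolding pir_L_def using xh by auto
  have U: "pir_U dphi a u K bb = {j \<in> K. u j \<le> x j}" unfolding pir_U_def using xh by auto
  have "Gf dphi a l u K m = (\<Sum>j\<in>K. a j * x j + (if x j \<le> l j then a j * (l j - x j) else 0)
        - (if u j \<le> x j then a j * (x j - u j) else 0))"
    unfolding Gf_def x_def[symmetric] using trm by (rule sum.cong[OF refl])
  also have "\<dots> = (\<Sum>j\<in>K. a j * x j) + (\<Sum>j\<in>K. if x j \<le> l j then a j * (l j - x j) else 0)
        - (\<Sum>j\<in>K. if u j \<le> x j then a j * (x j - u j) else 0)"
    by (simp add: sum.distrib sum_subtractf)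
  also have "(\<Sum>j\<in>K. if x j \<le> l j then a j * (l j - x j) else 0) = pir_nabla dphi a l K bb"
    unfolding pir_nabla_def L using fin by (simp add: sum.inter_filter xh)
  also have "(\<Sum>j\<in>K. if u j \<le> x j then a j * (x j - u j) else 0) = pir_Delta dphi a u K bb"
    unfolding pir_Delta_def U using fin by (simp add: sum.inter_filter xh)
  also have "(\<Sum>j\<in>K. a j * x j) = bb" unfolding x_def m_def by (rule mu_char[OF fin ne gd])
  finally show ?thesis unfolding m_def .
qed


lemma Gf_split:
  assumes fin: "finite K" and sub: "S \<subseteq> K"
  shows "Gf dphi a l u K m = Gf dphi a l u (K - S) m + (\<Sum>j\<in>S. a j * max (l j) (min (u j) (Xf dphi a j m)))"
  unfolding Gf_def using sum.subset_diff[OF sub fin] by simp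

lemma stepL:
  assumes fin: "finite K" and ne: "K \<noteq> {}" and gd: "\<And>j. j \<in> K \<Longrightarrow> good dphi a l u j"
    and nd: "pir_nabla dphi a l K bb > pir_Delta dphi a u K bb"
    and GM: "Gf dphi a l u (K - pir_L dphi a l K bb) M = bb - (\<Sum>j\<in>pir_L dphi a l K bb. a j * l j)"
  shows "pir_mu dphi a K bb < M \<and> Gf dphi a l u K M = bb"
proof -
  define m0 where "m0 = pir_mu dphi a K bb"
  define Ls where "Ls = pir_L dphi a l K bb"
  have sub: "Ls \<subseteq> K" unfolding Ls_def pir_L_def by auto
  have gd': "\<And>j. j \<in> K - Ls \<Longrightarrow> good dphi a l u j" using gd by auto
  have Lx: "Xf dphi a j m0 \<le> l j" if "j \<in> Ls" for j
    using that xhat_eq[OF gd, of j K bb] unfolding Ls_def pir_L_def m0_def by auto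
  have cl: "max (l j) (min (u j) (Xf dphi a j m)) = l j" if "j \<in> Ls" "Xf dphi a j m \<le> l j" for j m
  proof -
    have "j \<in> K" using that sub by blast
    then have "l j < u j" using gd unfolding good_def by blast
    then show ?thesis using that by (simp add: max_def min_def)
  qed
  have "(\<Sum>j\<in>Ls. a j * max (l j) (min (u j) (Xf dphi a j m0))) = (\<Sum>j\<in>Ls. a j * l j)"
  proof (rule sum.cong[OF refl])
    fix j assume jj: "j \<in> Ls"
    have "max (l j) (min (u j) (Xf dphi a j m0)) = l j" by (rule cl[OF jj Lx[OF jj]])
    then show "a j * max (l j) (min (u j) (Xf dphi a j m0)) = a j * l j" by simp
  qed
  then have "Gf dphi a l u K m0 = Gf dphi a l u (K - Ls) m0 + (\<Sum>j\<in>Ls. a j * l j)"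
    using Gf_split[OF fin sub] by simp
  moreover have "Gf dphi a l u K m0 = bb + pir_nabla dphi a l K bb - pir_Delta dphi a u K bb"
    unfolding m0_def by (rule Gf_at[OF fin ne gd])
  ultimately have "Gf dphi a l u (K - Ls) m0 > Gf dphi a l u (K - Ls) M"
    using nd GM unfolding Ls_def by simp
  note gg = this
  have lt: "m0 < M"
  proof (rule ccontr)
    assume "\<not> m0 < M" then have "M \<le> m0" by simp
    then have "Gf dphi a l u (K - Ls) m0 \<le> Gf dphi a l u (K - Ls) M" by (rule Gf_anti) (simp add: gd')
    then show False using gg by simp
  qed
  have LM: "Xf dphi a j M \<le> l j" if "j \<in> Ls" for j
  proof -
    have "j \<in> K" using sub that by blast
    then have "Xf dphi a j M \<le> Xf dphi a j m0" by (rule Xf_anti[OF gd less_imp_le[OF lt]])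
    then show ?thesis using Lx[OF that] by simp
  qed
  have "(\<Sum>j\<in>Ls. a j * max (l j) (min (u j) (Xf dphi a j M))) = (\<Sum>j\<in>Ls. a j * l j)"
  proof (rule sum.cong[OF refl])
    fix j assume jj: "j \<in> Ls"
    have "max (l j) (min (u j) (Xf dphi a j M)) = l j" by (rule cl[OF jj LM[OF jj]])
    then show "a j * max (l j) (min (u j) (Xf dphi a j M)) = a j * l j" by simp
  qed
  then have "Gf dphi a l u K M = Gf dphi a l u (K - Ls) M + (\<Sum>j\<in>Ls. a j * l j)"
    using Gf_split[OF fin sub] by simp
  then show ?thesis using lt GM unfolding Ls_def m0_def by simp
qed

lemma stepU:
  assumes fin: "finite K" and ne: "K \<noteq> {}" and gd: "\<And>j. j \<in> K \<Longrightarrow> good dphi a l u j"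
    and nd: "pir_nabla dphi a l K bb < pir_Delta dphi a u K bb"
    and GM: "Gf dphi a l u (K - pir_U dphi a u K bb) M = bb - (\<Sum>j\<in>pir_U dphi a u K bb. a j * u j)"
  shows "M < pir_mu dphi a K bb \<and> Gf dphi a l u K M = bb"
proof -
  define m0 where "m0 = pir_mu dphi a K bb"
  define Us where "Us = pir_U dphi a u K bb"
  have sub: "Us \<subseteq> K" unfolding Us_def pir_U_def by auto
  have gd': "\<And>j. j \<in> K - Us \<Longrightarrow> good dphi a l u j" using gd by auto
  have Ux: "u j \<le> Xf dphi a j m0" if "j \<in> Us" for j
    using that xhat_eq[OF gd, of j K bb] unfolding Us_def pir_U_def m0_def by auto
  have cl: "max (l j) (min (u j) (Xf dphi a j m)) = u j" if "j \<in> Us" "u j \<le> Xf dphi a j m" for j m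
  proof -
    have "j \<in> K" using that sub by blast
    then have "l j < u j" using gd unfolding good_def by blast
    then show ?thesis using that by (simp add: max_def min_def)
  qed
  have "(\<Sum>j\<in>Us. a j * max (l j) (min (u j) (Xf dphi a j m0))) = (\<Sum>j\<in>Us. a j * u j)"
  proof (rule sum.cong[OF refl])
    fix j assume jj: "j \<in> Us"
    have "max (l j) (min (u j) (Xf dphi a j m0)) = u j" by (rule cl[OF jj Ux[OF jj]])
    then show "a j * max (l j) (min (u j) (Xf dphi a j m0)) = a j * u j" by simp
  qed
  then have "Gf dphi a l u K m0 = Gf dphi a l u (K - Us) m0 + (\<Sum>j\<in>Us. a j * u j)"
    using Gf_split[OF fin sub] by simp
  moreover have "Gf dphi a l u K m0 = bb + pir_nabla dphi a l K bb - pir_Delta dphi a u K bb"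
    unfolding m0_def by (rule Gf_at[OF fin ne gd])
  ultimately have "Gf dphi a l u (K - Us) m0 < Gf dphi a l u (K - Us) M"
    using nd GM unfolding Us_def by simp
  note gg = this
  have lt: "M < m0"
  proof (rule ccontr)
    assume "\<not> M < m0" then have "m0 \<le> M" by simp
    then have "Gf dphi a l u (K - Us) M \<le> Gf dphi a l u (K - Us) m0" by (rule Gf_anti) (simp add: gd')
    then show False using gg by simp
  qed
  have UM: "u j \<le> Xf dphi a j M" if "j \<in> Us" for j
  proof -
    have "j \<in> K" using sub that by blast
    then have "Xf dphi a j m0 \<le> Xf dphi a j M" by (rule Xf_anti[OF gd less_imp_le[OF lt]])
    then show ?thesis using Ux[OF that] by simp
  qed
  have "(\<Sum>j\<in>Us. a j * max (l j) (min (u j) (Xf dphi a j M))) = (\<Sum>j\<in>Us. a j * u j)"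
  proof (rule sum.cong[OF refl])
    fix j assume jj: "j \<in> Us"
    have "max (l j) (min (u j) (Xf dphi a j M)) = u j" by (rule cl[OF jj UM[OF jj]])
    then show "a j * max (l j) (min (u j) (Xf dphi a j M)) = a j * u j" by simp
  qed
  then have "Gf dphi a l u K M = Gf dphi a l u (K - Us) M + (\<Sum>j\<in>Us. a j * u j)"
    using Gf_split[OF fin sub] by simp
  then show ?thesis using lt GM unfolding Us_def m0_def by simp
qed


theorem proposition6:
  fixes n :: nat and phi dphi :: "nat \<Rightarrow> real \<Rightarrow> real"
    and a l u :: "nat \<Rightarrow> real" and b :: real and kstar :: nat
  defines "J \<equiv> {1..n}"
  defines "Jk \<equiv> (\<lambda>k. fst (pir_state dphi a l u J b k))"
  defines "bk \<equiv> (\<lambda>k. snd (pir_state dphi a l u J b k))"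
  defines "Lk \<equiv> (\<lambda>k. pir_L dphi a l (Jk k) (bk k))"
  defines "Uk \<equiv> (\<lambda>k. pir_U dphi a u (Jk k) (bk k))"
  defines "nab \<equiv> (\<lambda>k. pir_nabla dphi a l (Jk k) (bk k))"
  defines "Del \<equiv> (\<lambda>k. pir_Delta dphi a u (Jk k) (bk k))"
  defines "L \<equiv> (\<Union>k\<in>{k. k < kstar \<and> nab k > Del k}. Lk k) \<union> Lk kstar"
  defines "U \<equiv> (\<Union>k\<in>{k. k < kstar \<and> nab k < Del k}. Uk k) \<union> Uk kstar"
  defines "mu \<equiv> pir_mu dphi a (Jk kstar) (bk kstar)"
  assumes sconv: "\<And>j. j \<in> J \<Longrightarrow> strictly_convex (phi j)"
    and deriv: "\<And>j x. j \<in> J \<Longrightarrow> (phi j has_real_derivative dphi j x) (at x)"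
    and cont: "\<And>j. j \<in> J \<Longrightarrow> continuous_on UNIV (dphi j)"
    and bij: "\<And>j. j \<in> J \<Longrightarrow> bij (dphi j)"
    and apos: "\<And>j. j \<in> J \<Longrightarrow> a j > 0"
    and lu: "\<And>j. j \<in> J \<Longrightarrow> l j < u j"
    and opt: "\<exists>x. (\<Sum>j\<in>J. a j * x j) = b \<and> (\<forall>j\<in>J. l j \<le> x j \<and> x j \<le> u j) \<and>
               (\<forall>y. (\<Sum>j\<in>J. a j * y j) = b \<and> (\<forall>j\<in>J. l j \<le> y j \<and> y j \<le> u j) \<longrightarrow>
                    (\<Sum>j\<in>J. phi j (x j)) \<le> (\<Sum>j\<in>J. phi j (y j)))"
    and notstop: "\<And>k. k < kstar \<Longrightarrow> Jk k \<noteq> {} \<and> nab k \<noteq> Del k"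
    and stop_ne: "Jk kstar \<noteq> {}"
    and stop_eq: "Del kstar = nab kstar"
  shows "\<forall>j\<in>J. (if j \<in> L then dphi j (l j) + mu * a j else 0) \<ge> 0
              \<and> (if j \<in> U then - dphi j (u j) - mu * a j else 0) \<ge> 0"
proof -
  have gdJ: "good dphi a l u j" if "j \<in> J" for j
    unfolding good_def using that apos lu bij cont
      dphi_mono[OF sconv[OF that] deriv[OF that] bij_is_inj[OF bij[OF that]]] by blast
  have stepeq: "(Jk (Suc k), bk (Suc k)) =
      (if Jk k = {} then (Jk k, bk k)
       else if nab k > Del k then (Jk k - Lk k, bk k - (\<Sum>j\<in>Lk k. a j * l j))
       else if nab k < Del k then (Jk k - Uk k, bk k - (\<Sum>j\<in>Uk k. a j * u j))
       else (Jk k, bk k))" for k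
    unfolding Jk_def bk_def Lk_def Uk_def nab_def Del_def
    by (simp add: Let_def split_beta)
  have subJ: "Jk k \<subseteq> J" for k
  proof (induction k)
    case 0 then show ?case unfolding Jk_def by simp
  next
    case (Suc k)
    have "Jk (Suc k) \<subseteq> Jk k" using stepeq[of k] by (auto split: if_splits)
    then show ?case using Suc by blast
  qed
  have finJ: "finite (Jk k)" for k using subJ[of k] finite_subset unfolding J_def by blast
  have gd: "\<And>j. j \<in> Jk k \<Longrightarrow> good dphi a l u j" for k using subJ gdJ by blast
  have neK: "Jk k \<noteq> {}" if "k \<le> kstar" for k
    using that notstop stop_ne by (cases "k = kstar") auto
  have sL: "Jk (Suc k) = Jk k - Lk k \<and> bk (Suc k) = bk k - (\<Sum>j\<in>Lk k. a j * l j)"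
    if "k < kstar" "nab k > Del k" for k
    using stepeq[of k] that notstop[OF that(1)] by auto
  have sU: "Jk (Suc k) = Jk k - Uk k \<and> bk (Suc k) = bk k - (\<Sum>j\<in>Uk k. a j * u j)"
    if "k < kstar" "nab k < Del k" for k
    using stepeq[of k] that notstop[OF that(1)] by auto
  have G: "Gf dphi a l u (Jk k) mu = bk k" if "k \<le> kstar" for k
    using that
  proof (induction k rule: inc_induct)
    case base
    show ?case unfolding mu_def using Gf_at[OF finJ neK[OF order_refl] gd] stop_eq
      unfolding nab_def Del_def by simp
  next
    case (step k)
    show ?case
    proof (cases "nab k > Del k")
      case True
      show ?thesis using stepL[OF finJ neK gd, of k] step True sL[OF step(2) True]
        unfolding nab_def Del_def Lk_def by auto
    next
      case False
      then have "nab k < Del k" using notstop[OF step(2)] by auto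
      then show ?thesis using stepU[OF finJ neK gd, of k] step sU[OF step(2)]
        unfolding nab_def Del_def Uk_def by auto
    qed
  qed
  have muL: "pir_mu dphi a (Jk k) (bk k) < mu" if "k < kstar" "nab k > Del k" for k
    using stepL[OF finJ neK gd, of k] that sL[OF that] G[of "Suc k"]
    unfolding nab_def Del_def Lk_def by auto
  have muU: "mu < pir_mu dphi a (Jk k) (bk k)" if "k < kstar" "nab k < Del k" for k
    using stepU[OF finJ neK gd, of k] that sU[OF that] G[of "Suc k"]
    unfolding nab_def Del_def Uk_def by auto
  have inL: "dphi j (l j) + m * a j \<ge> 0" if "j \<in> Lk k" "pir_mu dphi a (Jk k) (bk k) \<le> m" for j k m
  proof -
    have j: "j \<in> Jk k" using that unfolding Lk_def pir_L_def by auto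
    have "Xf dphi a j (pir_mu dphi a (Jk k) (bk k)) \<le> l j"
      using that xhat_eq[OF gd[OF j]] unfolding Lk_def pir_L_def by auto
    then have "- pir_mu dphi a (Jk k) (bk k) * a j \<le> dphi j (l j)" using Xf_le_iff[OF gd[OF j]] by blast
    moreover have "pir_mu dphi a (Jk k) (bk k) * a j \<le> m * a j"
      using that(2) gd[OF j] unfolding good_def by (simp add: mult_right_mono)
    ultimately show ?thesis by simp
  qed
  have inU: "- dphi j (u j) - m * a j \<ge> 0" if "j \<in> Uk k" "m \<le> pir_mu dphi a (Jk k) (bk k)" for j k m
  proof -
    have j: "j \<in> Jk k" using that unfolding Uk_def pir_U_def by auto
    have "u j \<le> Xf dphi a j (pir_mu dphi a (Jk k) (bk k))"
      using that xhat_eq[OF gd[OF j]] unfolding Uk_def pir_U_def by auto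
    then have "dphi j (u j) \<le> - pir_mu dphi a (Jk k) (bk k) * a j" using Xf_ge_iff[OF gd[OF j]] by blast
    moreover have "m * a j \<le> pir_mu dphi a (Jk k) (bk k) * a j"
      using that(2) gd[OF j] unfolding good_def by (simp add: mult_right_mono)
    ultimately show ?thesis by simp
  qed
  have A: "dphi j (l j) + mu * a j \<ge> 0" if jL: "j \<in> L" for j
  proof -
    consider k where "k < kstar" "nab k > Del k" "j \<in> Lk k" | "j \<in> Lk kstar"
      using jL unfolding L_def by blast
    then show ?thesis
    proof cases
      case 1 then show ?thesis using inL[of j k mu] muL[of k] by simp
    next
      case 2 then show ?thesis using inL[of j kstar mu] unfolding mu_def by simp
    qed
  qed
  have B: "- dphi j (u j) - mu * a j \<ge> 0" if jL: "j \<in> U" for j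
  proof -
    consider k where "k < kstar" "nab k < Del k" "j \<in> Uk k" | "j \<in> Uk kstar"
      using jL unfolding U_def by blast
    then show ?thesis
    proof cases
      case 1 then show ?thesis using inU[of j k mu] muU[of k] by simp
    next
      case 2 then show ?thesis using inU[of j kstar mu] unfolding mu_def by simp
    qed
  qed
  show ?thesis using A B by simp
qed

end
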